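(* Let $\mathcal{A}$ be the family of all Lebesgue-measurable subsets $A\subseteq(0,\infty)$ with $\lambda(A)\le\sqrt{\inf A}$. For measurable $f:(0,\infty)\to[0,\infty]$ set $\rho_Y(f)=\sup_{A\in\mathcal{A}}\int_A f(t)\,dt$. Then $\rho_Y$ is a function norm, the function space $Y$ it generates is a Banach space, and $Y$ is not essentially subrearrangement-invariant.
   Context: $\lambda$ is Lebesgue measure on $(0,\infty)$, with its usual order. A function norm on $(0,\infty)$ is a map $\rho$ from nonnegative measurable functions into $[0,\infty]$ that is subadditive, positively homogeneous, and vanishes exactly on functions that are $0$ a.e.; the function space consists of a.e.-classes of measurable $f:(0,\infty)\to[-\infty,\infty]$ with $\|f\|:=\rho(|f|)<\infty$. $\mathbb{MO}(E,F)$ is the set of strictly increasing bijections $m:E\to F$ such that $m$ and $m^{-1}$ are measure-preserving (preimages of measurable sets are measurable of equal measure). A function space $X$ on $(0,\infty)$ is subrearrangement-invariant if $\|f\circ m\|_X=\|f\mathbf{1}_F\|_X$ for every measurable $F\subseteq(0,\infty)$, every $m\in\mathbb{MO}((0,\infty),F)$ and every $f\in X$; it is essentially subrearrangement-invariant if it admits an equivalent subrearrangement-invariant norm. *)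

theory Defs
  imports "HOL-Analysis.Analysis"
begin

text \<open>Functions on (0,infinity) are represented by functions on the reals; only
  their values on (0,infinity) matter. Measurability is Lebesgue measurability on
  (0,infinity).\<close>

abbreviation pos_half :: "real set" where "pos_half \<equiv> {0<..}"

definition nonneg_meas :: "(real \<Rightarrow> ennreal) set" where
  "nonneg_meas = borel_measurable (lebesgue_on pos_half)"

definition function_norm :: "((real \<Rightarrow> ennreal) \<Rightarrow> ennreal) \<Rightarrow> bool" where
  "function_norm \<rho> \<longleftrightarrow>
     (\<forall>f\<in>nonneg_meas. \<forall>g\<in>nonneg_meas. (\<forall>t>0. f t = g t) \<longrightarrow> \<rho> f = \<rho> g) \<and>
     (\<forall>f\<in>nonneg_meas. \<forall>g\<in>nonneg_meas. \<rho> (\<lambda>t. f t + g t) \<le> \<rho> f + \<rho> g) \<and>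
     (\<forall>f\<in>nonneg_meas. \<forall>a::real. a \<ge> 0 \<longrightarrow> \<rho> (\<lambda>t. ennreal a * f t) = ennreal a * \<rho> f) \<and>
     (\<forall>f\<in>nonneg_meas. \<rho> f = 0 \<longleftrightarrow> (AE t in lebesgue_on pos_half. f t = 0))"

definition fnorm :: "((real \<Rightarrow> ennreal) \<Rightarrow> ennreal) \<Rightarrow> (real \<Rightarrow> ereal) \<Rightarrow> ennreal" where
  "fnorm \<rho> f = \<rho> (\<lambda>t. e2ennreal \<bar>f t\<bar>)"

definition fspace :: "((real \<Rightarrow> ennreal) \<Rightarrow> ennreal) \<Rightarrow> (real \<Rightarrow> ereal) set" where
  "fspace \<rho> = {f. f \<in> borel_measurable (lebesgue_on pos_half) \<and> fnorm \<rho> f < \<infinity>}"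

text \<open>The function space (a.e.-classes of elements of fspace, normed by fnorm) is a
  Banach space: it is a real vector space, fnorm is well defined on a.e.-classes and is
  a norm on them, and it is complete.\<close>
definition banach_fspace :: "((real \<Rightarrow> ennreal) \<Rightarrow> ennreal) \<Rightarrow> bool" where
  "banach_fspace \<rho> \<longleftrightarrow>
     (\<forall>f\<in>fspace \<rho>. \<forall>g\<in>fspace \<rho>. (\<lambda>t. f t + g t) \<in> fspace \<rho>) \<and>
     (\<forall>f\<in>fspace \<rho>. \<forall>c::real. (\<lambda>t. ereal c * f t) \<in> fspace \<rho>) \<and>
     (\<forall>f\<in>fspace \<rho>. \<forall>g\<in>fspace \<rho>.
        (AE t in lebesgue_on pos_half. f t = g t) \<longrightarrow> fnorm \<rho> f = fnorm \<rho> g) \<and>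
     (\<forall>f\<in>fspace \<rho>. fnorm \<rho> f = 0 \<longleftrightarrow> (AE t in lebesgue_on pos_half. f t = 0)) \<and>
     (\<forall>f\<in>fspace \<rho>. \<forall>c::real. fnorm \<rho> (\<lambda>t. ereal c * f t) = ennreal \<bar>c\<bar> * fnorm \<rho> f) \<and>
     (\<forall>f\<in>fspace \<rho>. \<forall>g\<in>fspace \<rho>. fnorm \<rho> (\<lambda>t. f t + g t) \<le> fnorm \<rho> f + fnorm \<rho> g) \<and>
     (\<forall>u::nat \<Rightarrow> real \<Rightarrow> ereal. (\<forall>n. u n \<in> fspace \<rho>) \<longrightarrow>
        (\<forall>e>0. \<exists>N. \<forall>m\<ge>N. \<forall>n\<ge>N. fnorm \<rho> (\<lambda>t. u m t - u n t) < ennreal e) \<longrightarrow>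
        (\<exists>f\<in>fspace \<rho>. (\<lambda>n. fnorm \<rho> (\<lambda>t. u n t - f t)) \<longlonglongrightarrow> 0))"

definition measure_preserving_on :: "real set \<Rightarrow> real set \<Rightarrow> (real \<Rightarrow> real) \<Rightarrow> bool" where
  "measure_preserving_on E F m \<longleftrightarrow>
     (\<forall>B. B \<in> sets lebesgue \<longrightarrow> B \<subseteq> F \<longrightarrow>
        m -` B \<inter> E \<in> sets lebesgue \<and> emeasure lebesgue (m -` B \<inter> E) = emeasure lebesgue B)"

definition MO :: "real set \<Rightarrow> real set \<Rightarrow> (real \<Rightarrow> real) set" where
  "MO E F = {m. strict_mono_on E m \<and> bij_betw m E F \<and>
                measure_preserving_on E F m \<and> measure_preserving_on F E (inv_into E m)}"

definition subrearrangement_invariant :: "((real \<Rightarrow> ennreal) \<Rightarrow> ennreal) \<Rightarrow> bool" where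
  "subrearrangement_invariant \<rho> \<longleftrightarrow>
     (\<forall>F m f. F \<in> sets lebesgue \<longrightarrow> F \<subseteq> pos_half \<longrightarrow> m \<in> MO pos_half F \<longrightarrow>
        f \<in> fspace \<rho> \<longrightarrow>
        fnorm \<rho> (f \<circ> m) = fnorm \<rho> (\<lambda>t. if t \<in> F then f t else 0))"

definition ess_subrearrangement_invariant :: "((real \<Rightarrow> ennreal) \<Rightarrow> ennreal) \<Rightarrow> bool" where
  "ess_subrearrangement_invariant \<rho> \<longleftrightarrow>
     (\<exists>\<sigma>. function_norm \<sigma> \<and> subrearrangement_invariant \<sigma> \<and> fspace \<sigma> = fspace \<rho> \<and>
        (\<exists>c::real. c > 0 \<and> (\<forall>f\<in>fspace \<rho>.
           fnorm \<rho> f \<le> ennreal c * fnorm \<sigma> f \<and> fnorm \<sigma> f \<le> ennreal c * fnorm \<rho> f)))"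

text \<open>The family A: measurable A in (0,infinity) with lambda(A) <= sqrt(inf A)
  (the empty set, with inf = +infinity, is admitted; it does not affect the supremum).\<close>
definition calA :: "real set set" where
  "calA = {A. A \<in> sets lebesgue \<and> A \<subseteq> pos_half \<and>
              (A = {} \<or> emeasure lebesgue A \<le> ennreal (sqrt (Inf A)))}"

definition rhoY :: "(real \<Rightarrow> ennreal) \<Rightarrow> ennreal" where
  "rhoY f = (SUP A\<in>calA. set_nn_integral lebesgue A f)"

end

theory Submission
  imports Defs
begin


lemma calA_sets: "A \<in> calA \<Longrightarrow> A \<in> sets lebesgue" and calA_sub: "A \<in> calA \<Longrightarrow> A \<subseteq> pos_half"
  by (auto simp: calA_def)

lemma rhoY_alt: "rhoY f = (SUP A\<in>calA. \<integral>\<^sup>+x. f x \<partial>lebesgue_on A)"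
  unfolding rhoY_def
  by (intro SUP_cong refl, subst nn_integral_restrict_space) (auto dest: calA_sets)

lemma meas_sub: "f \<in> borel_measurable (lebesgue_on pos_half) \<Longrightarrow> A \<in> calA \<Longrightarrow> f \<in> borel_measurable (lebesgue_on A)"
  using measurable_restrict_mono calA_sub by blast

lemma AE_sub:
  assumes "AE t in lebesgue_on pos_half. P t" "A \<in> calA"
  shows "AE t in lebesgue_on A. P t"
proof -
  have "AE t in lebesgue. t \<in> pos_half \<longrightarrow> P t"
    using assms(1) by (subst (asm) AE_restrict_space_iff) auto
  then have "AE t in lebesgue. t \<in> A \<longrightarrow> P t"
    by eventually_elim (use calA_sub[OF assms(2)] in auto)
  then show ?thesis
    using calA_sets[OF assms(2)] by (subst AE_restrict_space_iff) auto
qed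

lemma rhoY_mono_AE:
  assumes "AE t in lebesgue_on pos_half. f t \<le> g t"
  shows "rhoY f \<le> rhoY g"
  unfolding rhoY_alt
proof (rule SUP_mono)
  fix A assume A: "A \<in> calA"
  show "\<exists>B\<in>calA. (\<integral>\<^sup>+x. f x \<partial>lebesgue_on A) \<le> (\<integral>\<^sup>+x. g x \<partial>lebesgue_on B)"
    using A by (intro bexI[of _ A] nn_integral_mono_AE AE_sub[OF assms])
qed

lemma rhoY_mono:
  assumes "\<And>t. t > 0 \<Longrightarrow> f t \<le> g t"
  shows "rhoY f \<le> rhoY g"
  by (rule rhoY_mono_AE) (auto intro!: AE_I2 simp: assms)

lemma rhoY_add:
  assumes "f \<in> nonneg_meas" "g \<in> nonneg_meas"
  shows "rhoY (\<lambda>t. f t + g t) \<le> rhoY f + rhoY g"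
  unfolding rhoY_alt
proof (rule SUP_least)
  fix A assume A: "A \<in> calA"
  have "(\<integral>\<^sup>+x. f x + g x \<partial>lebesgue_on A) = (\<integral>\<^sup>+x. f x \<partial>lebesgue_on A) + (\<integral>\<^sup>+x. g x \<partial>lebesgue_on A)"
    using assms A by (intro nn_integral_add) (auto simp: nonneg_meas_def intro: meas_sub)
  also have "\<dots> \<le> (SUP A\<in>calA. \<integral>\<^sup>+x. f x \<partial>lebesgue_on A) + (SUP A\<in>calA. \<integral>\<^sup>+x. g x \<partial>lebesgue_on A)"
    using A by (intro add_mono SUP_upper)
  finally show "(\<integral>\<^sup>+x. f x + g x \<partial>lebesgue_on A) \<le> \<dots>" .
qed

lemma rhoY_cmult:
  assumes "f \<in> nonneg_meas"
  shows "rhoY (\<lambda>t. ennreal a * f t) = ennreal a * rhoY f"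
  unfolding rhoY_alt SUP_mult_left_ennreal
  using assms by (intro SUP_cong refl nn_integral_cmult) (auto simp: nonneg_meas_def intro: meas_sub)

lemma cover:
  assumes "t > 0"
  shows "\<exists>q\<in>\<rat>. q > 0 \<and> q \<le> t \<and> t \<le> q + sqrt q"
proof -
  have "max (t/2) (t - sqrt (t/2)) < t" using assms by auto
  then obtain q where q: "q \<in> \<rat>" "max (t/2) (t - sqrt (t/2)) < q" "q < t"
    using Rats_dense_in_real by blast
  have s: "sqrt (t/2) \<le> sqrt q" using q by auto
  have h: "t/2 < q" "t - sqrt (t/2) < q" using q(2) by auto
  have "t \<le> q + sqrt q" using s h by linarith
  then show ?thesis using q h assms by (intro bexI[of _ q]) auto
qed

lemma interval_calA: "(q::real) > 0 \<Longrightarrow> {q..q + sqrt q} \<in> calA"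
  unfolding calA_def by auto

lemma AE_from_calA:
  assumes "\<And>A. A \<in> calA \<Longrightarrow> AE t in lebesgue_on A. P t"
  shows "AE t in lebesgue_on pos_half. P t"
proof -
  have "AE t in lebesgue. \<forall>q\<in>(\<rat>::real set) \<inter> {0<..}. t \<in> {q..q + sqrt q} \<longrightarrow> P t"
  proof (subst AE_ball_countable)
    show "countable ((\<rat>::real set) \<inter> {0<..})" using countable_rat by auto
    show "\<forall>q\<in>(\<rat>::real set) \<inter> {0<..}. AE t in lebesgue. t \<in> {q..q + sqrt q} \<longrightarrow> P t"
    proof
      fix q :: real assume q: "q \<in> \<rat> \<inter> {0<..}"
      have "AE t in lebesgue_on {q..q + sqrt q}. P t" using q by (intro assms interval_calA) auto
      then show "AE t in lebesgue. t \<in> {q..q + sqrt q} \<longrightarrow> P t"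
        by (subst (asm) AE_restrict_space_iff) auto
    qed
  qed
  then have "AE t in lebesgue. t \<in> pos_half \<longrightarrow> P t"
    by eventually_elim (use cover in force)
  then show ?thesis by (subst AE_restrict_space_iff) auto
qed

lemma rhoY_zero:
  assumes "f \<in> nonneg_meas"
  shows "rhoY f = 0 \<longleftrightarrow> (AE t in lebesgue_on pos_half. f t = 0)"
proof
  assume "rhoY f = 0"
  then have "\<And>A. A \<in> calA \<Longrightarrow> (\<integral>\<^sup>+x. f x \<partial>lebesgue_on A) = 0"
    unfolding rhoY_alt by (metis SUP_upper le_zero_eq)
  then show "AE t in lebesgue_on pos_half. f t = 0"
    using assms by (intro AE_from_calA) (simp add: nonneg_meas_def flip: nn_integral_0_iff_AE[OF meas_sub])
next
  assume "AE t in lebesgue_on pos_half. f t = 0"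
  then have "\<And>A. A \<in> calA \<Longrightarrow> (\<integral>\<^sup>+x. f x \<partial>lebesgue_on A) = 0"
    by (subst nn_integral_cong_AE[where v="\<lambda>_. 0"]) (auto dest: AE_sub)
  then show "rhoY f = 0" unfolding rhoY_alt by (auto intro!: antisym SUP_least)
qed

lemma rhoY_finite_AE:
  assumes "f \<in> nonneg_meas" "rhoY f < \<infinity>"
  shows "AE t in lebesgue_on pos_half. f t \<noteq> \<infinity>"
proof (rule AE_from_calA)
  fix A assume A: "A \<in> calA"
  have "(\<integral>\<^sup>+x. f x \<partial>lebesgue_on A) \<le> rhoY f" unfolding rhoY_alt using A by (rule SUP_upper)
  then have "(\<integral>\<^sup>+x. f x \<partial>lebesgue_on A) \<noteq> \<infinity>" using assms by (auto simp: top_unique)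
  then show "AE t in lebesgue_on A. f t \<noteq> \<infinity>"
    using assms A by (intro nn_integral_PInf_AE) (auto simp: nonneg_meas_def intro: meas_sub)
qed

lemma function_norm_rhoY: "function_norm rhoY"
  unfolding function_norm_def
proof (intro conjI ballI allI impI)
  fix f g :: "real \<Rightarrow> ennreal" assume "\<forall>t>0. f t = g t"
  then show "rhoY f = rhoY g" by (intro antisym rhoY_mono) auto
qed (auto simp: rhoY_add rhoY_cmult rhoY_zero)



lemma e2_abs_cmult: "e2ennreal \<bar>ereal c * x\<bar> = ennreal \<bar>c\<bar> * e2ennreal \<bar>x\<bar>"
proof -
  have "\<bar>ereal c * x\<bar> = ereal \<bar>c\<bar> * \<bar>x\<bar>" by (cases x) (auto simp: abs_mult)
  moreover have "e2ennreal (ereal a * y) = ennreal a * e2ennreal y" if "a \<ge> 0" "y \<ge> 0" for a y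
    using that by (cases y) (auto simp: ennreal_mult e2ennreal_ereal ennreal_mult_top e2ennreal_neg)
  ultimately show ?thesis by simp
qed

lemma e2_abs_add: "e2ennreal \<bar>x + y\<bar> \<le> e2ennreal \<bar>x\<bar> + e2ennreal \<bar>y\<bar>"
proof -
  have "e2ennreal (a + b) = e2ennreal a + e2ennreal b" if "a \<ge> 0" "b \<ge> 0" for a b :: ereal
    using that by (cases a; cases b) (auto simp: e2ennreal_ereal ennreal_plus)
  then show ?thesis using e2ennreal_mono[OF ereal_abs_add[of x y]] by simp
qed

lemma e2_abs_zero: "e2ennreal \<bar>x\<bar> = 0 \<longleftrightarrow> x = 0"
  by (cases x) (auto simp: e2ennreal_ereal)

lemma e2_meas: "f \<in> borel_measurable (lebesgue_on pos_half) \<Longrightarrow> (\<lambda>t. e2ennreal \<bar>f t\<bar>) \<in> nonneg_meas"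
  unfolding nonneg_meas_def by measurable

lemma fnorm_add: "f \<in> borel_measurable (lebesgue_on pos_half) \<Longrightarrow> g \<in> borel_measurable (lebesgue_on pos_half)
  \<Longrightarrow> fnorm rhoY (\<lambda>t. f t + g t) \<le> fnorm rhoY f + fnorm rhoY g"
  unfolding fnorm_def
  by (rule order.trans[OF rhoY_mono[OF e2_abs_add] rhoY_add[OF e2_meas e2_meas]])

lemma fnorm_cmult: "f \<in> borel_measurable (lebesgue_on pos_half)
  \<Longrightarrow> fnorm rhoY (\<lambda>t. ereal c * f t) = ennreal \<bar>c\<bar> * fnorm rhoY f"
  unfolding fnorm_def e2_abs_cmult by (rule rhoY_cmult[OF e2_meas])



lemma telescope_conv:
  fixes x :: "nat \<Rightarrow> real"
  assumes "summable (\<lambda>k. \<bar>x (Suc k) - x k\<bar>)"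
  shows "x \<longlonglongrightarrow> lim x"
proof -
  have s: "summable (\<lambda>k. x (Suc k) - x k)" using summable_rabs_cancel[OF assms] .
  have "(\<lambda>n. (\<Sum>i<n. x (Suc i) - x i) + x 0) \<longlonglongrightarrow> (\<Sum>i. x (Suc i) - x i) + x 0"
    by (intro tendsto_add summable_LIMSEQ s tendsto_const)
  then have "x \<longlonglongrightarrow> (\<Sum>i. x (Suc i) - x i) + x 0"
    by (simp add: sum_lessThan_telescope)
  then show ?thesis using convergent_LIMSEQ_iff convergentI by blast
qed

lemma e2_tri: "e2ennreal \<bar>ereal b\<bar> \<le> e2ennreal \<bar>a - ereal b\<bar> + e2ennreal \<bar>a\<bar>"
proof (cases a)
  case (real r)
  have "ennreal \<bar>b\<bar> \<le> ennreal (\<bar>r - b\<bar> + \<bar>r\<bar>)" by (intro ennreal_leI) auto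
  then show ?thesis using real by (simp add: e2ennreal_ereal ennreal_plus)
qed (auto simp: e2ennreal_infty)

lemma geom2: "(\<Sum>k. ennreal ((1/2)^k)) = ennreal 2"
proof -
  have s: "(\<lambda>k. (1/2::real)^k) sums 2" using geometric_sums[of "1/2::real"] by simp
  show ?thesis by (rule suminf_ennreal_eq[OF _ s]) simp
qed

lemma complete_rhoY:
  assumes u: "\<And>n. u n \<in> fspace rhoY"
  and C: "\<forall>e>0. \<exists>N. \<forall>m\<ge>N. \<forall>n\<ge>N. fnorm rhoY (\<lambda>t. u m t - u n t) < ennreal e"
  shows "\<exists>f\<in>fspace rhoY. (\<lambda>n. fnorm rhoY (\<lambda>t. u n t - f t)) \<longlonglongrightarrow> 0"
proof -
  have um[measurable]: "\<And>n. u n \<in> borel_measurable (lebesgue_on pos_half)"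
    and uf: "\<And>n. fnorm rhoY (u n) < \<infinity>" using u by (auto simp: fspace_def)
  have "\<forall>k. \<exists>N. \<forall>m\<ge>N. \<forall>n\<ge>N. fnorm rhoY (\<lambda>t. u m t - u n t) < ennreal ((1/2)^k)"
    using C by simp
  then obtain N where N: "\<And>k m n. m \<ge> N k \<Longrightarrow> n \<ge> N k \<Longrightarrow> fnorm rhoY (\<lambda>t. u m t - u n t) < ennreal ((1/2)^k)"
    unfolding choice_iff by blast
  define r where "r k = Max (N ` {..k}) + k" for k
  have rN: "N k \<le> r j" if "k \<le> j" for k j
  proof -
    have "N k \<le> Max (N ` {..j})" using that by (intro Max_ge) auto
    then show ?thesis by (simp add: r_def)
  qed
  have rk: "k \<le> r k" for k by (simp add: r_def)
  have mx: "Max (N ` {..k}) \<le> Max (N ` {..Suc k})" for k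
    by (intro Max_mono) auto
  have "r k < r (Suc k)" for k using mx[of k] unfolding r_def by linarith
  then have "strict_mono r" by (intro strict_monoI_Suc)
  define G where "G t = (\<Sum>k. e2ennreal \<bar>u (r (Suc k)) t - u (r k) t\<bar>)" for t
  have Gm: "G \<in> nonneg_meas" unfolding G_def nonneg_meas_def by measurable
  have "rhoY G \<le> ennreal 2"
    unfolding rhoY_alt
  proof (rule SUP_least)
    fix A assume A: "A \<in> calA"
    have "(\<integral>\<^sup>+t. G t \<partial>lebesgue_on A) = (\<Sum>k. \<integral>\<^sup>+t. e2ennreal \<bar>u (r (Suc k)) t - u (r k) t\<bar> \<partial>lebesgue_on A)"
      unfolding G_def by (intro nn_integral_suminf meas_sub[OF _ A]) measurable
    also have "\<dots> \<le> (\<Sum>k. ennreal ((1/2)^k))"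
    proof (intro suminf_le summableI)
      fix k
      have "(\<integral>\<^sup>+t. e2ennreal \<bar>u (r (Suc k)) t - u (r k) t\<bar> \<partial>lebesgue_on A) \<le> fnorm rhoY (\<lambda>t. u (r (Suc k)) t - u (r k) t)"
        unfolding fnorm_def rhoY_alt using A by (rule SUP_upper)
      also have "\<dots> < ennreal ((1/2)^k)" by (intro N rN) auto
      finally show "(\<integral>\<^sup>+t. e2ennreal \<bar>u (r (Suc k)) t - u (r k) t\<bar> \<partial>lebesgue_on A) \<le> ennreal ((1/2)^k)"
        by simp
    qed
    finally show "(\<integral>\<^sup>+t. G t \<partial>lebesgue_on A) \<le> ennreal 2" using geom2 by simp
  qed
  then have "rhoY G < \<infinity>" by (rule le_less_trans) simp
  then have "AE t in lebesgue_on pos_half. G t \<noteq> \<infinity>"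
    using Gm by (intro rhoY_finite_AE)
  moreover have "AE t in lebesgue_on pos_half. \<forall>n. e2ennreal \<bar>u n t\<bar> \<noteq> \<infinity>"
    unfolding AE_all_countable using uf by (intro allI rhoY_finite_AE e2_meas um) (simp add: fnorm_def)
  ultimately have good: "AE t in lebesgue_on pos_half. G t \<noteq> \<infinity> \<and> (\<forall>n. \<bar>u n t\<bar> \<noteq> \<infinity>)"
  proof eventually_elim
    case (elim t)
    have "\<bar>u n t\<bar> \<noteq> \<infinity>" for n
    proof
      assume "\<bar>u n t\<bar> = \<infinity>"
      then have "e2ennreal \<bar>u n t\<bar> = top" by (simp add: e2ennreal_infty)
      then show False using elim(2) by (simp add: top_ennreal_def)
    qed
    then show ?case using elim by simp
  qed
  define x where "x t k = real_of_ereal (u (r k) t)" for t k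
  define f where "f t = ereal (lim (x t))" for t
  have fm[measurable]: "f \<in> borel_measurable (lebesgue_on pos_half)"
  proof -
    have "(\<lambda>t. lim (x t)) \<in> borel_measurable (lebesgue_on pos_half)"
      unfolding x_def by (rule borel_measurable_lim_metric) measurable
    then show ?thesis unfolding f_def by measurable
  qed
  have conv: "x t \<longlonglongrightarrow> lim (x t)" if "G t \<noteq> \<infinity>" "\<forall>n. \<bar>u n t\<bar> \<noteq> \<infinity>" for t
  proof (rule telescope_conv)
    have ux: "u (r k) t = ereal (x t k)" for k
    proof -
      have "\<bar>u (r k) t\<bar> \<noteq> \<infinity>" by (rule that(2)[rule_format])
      then show ?thesis unfolding x_def by (cases "u (r k) t") auto
    qed
    have "G t = (\<Sum>k. ennreal \<bar>x t (Suc k) - x t k\<bar>)"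
      unfolding G_def ux by (simp add: e2ennreal_ereal)
    then show "summable (\<lambda>k. \<bar>x t (Suc k) - x t k\<bar>)"
      using that(1) by (intro summable_suminf_not_top) auto
  qed
  have est: "fnorm rhoY (\<lambda>t. u n t - f t) \<le> ennreal e" if e: "e > 0" and n: "\<forall>m\<ge>M. \<forall>n\<ge>M. fnorm rhoY (\<lambda>t. u m t - u n t) < ennreal e"
    and nM: "n \<ge> M" for e M n
    unfolding fnorm_def rhoY_alt
  proof (rule SUP_least)
    fix A assume A: "A \<in> calA"
    have "AE t in lebesgue_on A. e2ennreal \<bar>u n t - f t\<bar> = liminf (\<lambda>k. e2ennreal \<bar>u n t - u (r k) t\<bar>)"
      using AE_sub[OF good A]
    proof eventually_elim
      case (elim t)
      have "\<bar>u n t\<bar> \<noteq> \<infinity>" by (rule elim[THEN conjunct2, rule_format])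
      then obtain a where a: "u n t = ereal a" by (cases "u n t") auto
      have ux: "u (r k) t = ereal (x t k)" for k
      proof -
        have "\<bar>u (r k) t\<bar> \<noteq> \<infinity>" by (rule elim[THEN conjunct2, rule_format])
        then show ?thesis unfolding x_def by (cases "u (r k) t") auto
      qed
      have "(\<lambda>k. ennreal \<bar>a - x t k\<bar>) \<longlonglongrightarrow> ennreal \<bar>a - lim (x t)\<bar>"
        by (intro tendsto_ennrealI tendsto_rabs tendsto_diff tendsto_const conv) (use elim in auto)
      then have "liminf (\<lambda>k. ennreal \<bar>a - x t k\<bar>) = ennreal \<bar>a - lim (x t)\<bar>"
        by (intro lim_imp_Liminf) auto
      then show ?case
        unfolding a ux f_def by (simp add: e2ennreal_ereal)
    qed
    then have "(\<integral>\<^sup>+t. e2ennreal \<bar>u n t - f t\<bar> \<partial>lebesgue_on A) = (\<integral>\<^sup>+t. liminf (\<lambda>k. e2ennreal \<bar>u n t - u (r k) t\<bar>) \<partial>lebesgue_on A)"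
      by (rule nn_integral_cong_AE)
    also have "\<dots> \<le> liminf (\<lambda>k. \<integral>\<^sup>+t. e2ennreal \<bar>u n t - u (r k) t\<bar> \<partial>lebesgue_on A)"
      by (intro nn_integral_liminf meas_sub[OF _ A]) measurable
    also have "\<dots> \<le> ennreal e"
    proof (intro Liminf_le)
      show "\<forall>\<^sub>F k in sequentially. (\<integral>\<^sup>+t. e2ennreal \<bar>u n t - u (r k) t\<bar> \<partial>lebesgue_on A) \<le> ennreal e"
        unfolding eventually_sequentially
      proof (intro exI allI impI)
        fix k assume "k \<ge> M"
        then have "r k \<ge> M" using rk order.trans by blast
        have "(\<integral>\<^sup>+t. e2ennreal \<bar>u n t - u (r k) t\<bar> \<partial>lebesgue_on A) \<le> fnorm rhoY (\<lambda>t. u n t - u (r k) t)"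
          unfolding fnorm_def rhoY_alt using A by (rule SUP_upper)
        also have "\<dots> < ennreal e" using n nM \<open>r k \<ge> M\<close> by auto
        finally show "(\<integral>\<^sup>+t. e2ennreal \<bar>u n t - u (r k) t\<bar> \<partial>lebesgue_on A) \<le> ennreal e" by simp
      qed
    qed simp
    finally show "(\<integral>\<^sup>+t. e2ennreal \<bar>u n t - f t\<bar> \<partial>lebesgue_on A) \<le> ennreal e" .
  qed
  obtain M1 where M1: "\<forall>m\<ge>M1. \<forall>n\<ge>M1. fnorm rhoY (\<lambda>t. u m t - u n t) < ennreal 1"
    using C[rule_format, OF zero_less_one] by blast
  have "fnorm rhoY f \<le> rhoY (\<lambda>t. e2ennreal \<bar>u M1 t - f t\<bar> + e2ennreal \<bar>u M1 t\<bar>)"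
    unfolding fnorm_def f_def by (rule rhoY_mono, rule e2_tri)
  also have "\<dots> \<le> fnorm rhoY (\<lambda>t. u M1 t - f t) + fnorm rhoY (u M1)"
    unfolding fnorm_def by (intro rhoY_add e2_meas) measurable
  also have "\<dots> < \<infinity>"
  proof -
    have "fnorm rhoY (\<lambda>t. u M1 t - f t) \<le> ennreal 1" using est[OF _ M1, of M1] by simp
    then have "fnorm rhoY (\<lambda>t. u M1 t - f t) < \<infinity>" by (rule le_less_trans) simp
    then show ?thesis using uf[of M1] by (simp add: ennreal_add_less_top)
  qed
  finally have "f \<in> fspace rhoY" by (simp add: fspace_def)
  moreover have "(\<lambda>n. fnorm rhoY (\<lambda>t. u n t - f t)) \<longlonglongrightarrow> 0"
  proof (rule tendsto_zero_ennreal)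
    fix e :: real assume "e > 0"
    then obtain M where M: "\<forall>m\<ge>M. \<forall>n\<ge>M. fnorm rhoY (\<lambda>t. u m t - u n t) < ennreal (e/2)"
      using C[rule_format, of "e/2"] \<open>e > 0\<close> by auto
    have "fnorm rhoY (\<lambda>t. u n t - f t) < ennreal e" if "n \<ge> M" for n
    proof -
      have "fnorm rhoY (\<lambda>t. u n t - f t) \<le> ennreal (e/2)" using est[OF _ M that] \<open>e > 0\<close> by simp
      also have "\<dots> < ennreal e" using \<open>e > 0\<close> by (intro ennreal_lessI) auto
      finally show ?thesis .
    qed
    then show "\<forall>\<^sub>F n in sequentially. fnorm rhoY (\<lambda>t. u n t - f t) < ennreal e"
      unfolding eventually_sequentially by blast
  qed
  ultimately show ?thesis by blast
qed



lemma banach_rhoY: "banach_fspace rhoY"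
  unfolding banach_fspace_def
proof (intro conjI ballI allI impI)
  fix f g assume f: "f \<in> fspace rhoY" and g: "g \<in> fspace rhoY"
  have fm: "f \<in> borel_measurable (lebesgue_on pos_half)" and gm: "g \<in> borel_measurable (lebesgue_on pos_half)"
    using f g by (auto simp: fspace_def)
  show "fnorm rhoY (\<lambda>t. f t + g t) \<le> fnorm rhoY f + fnorm rhoY g" by (rule fnorm_add[OF fm gm])
  moreover have "fnorm rhoY f + fnorm rhoY g < \<infinity>"
    using f g by (simp add: fspace_def ennreal_add_less_top)
  ultimately have "fnorm rhoY (\<lambda>t. f t + g t) < \<infinity>" by (rule le_less_trans)
  moreover have "(\<lambda>t. f t + g t) \<in> borel_measurable (lebesgue_on pos_half)" using fm gm by measurable
  ultimately show "(\<lambda>t. f t + g t) \<in> fspace rhoY" by (simp add: fspace_def)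
next
  fix f c assume f: "f \<in> fspace rhoY"
  have fm: "f \<in> borel_measurable (lebesgue_on pos_half)" using f by (auto simp: fspace_def)
  show "fnorm rhoY (\<lambda>t. ereal c * f t) = ennreal \<bar>c\<bar> * fnorm rhoY f" by (rule fnorm_cmult[OF fm])
  moreover have "(\<lambda>t. ereal c * f t) \<in> borel_measurable (lebesgue_on pos_half)" using fm by measurable
  ultimately show "(\<lambda>t. ereal c * f t) \<in> fspace rhoY"
    using f by (simp add: fspace_def ennreal_mult_less_top)
next
  fix f g assume f: "f \<in> fspace rhoY" and g: "g \<in> fspace rhoY"
    and ae: "AE t in lebesgue_on pos_half. f t = g t"
  show "fnorm rhoY f = fnorm rhoY g" unfolding fnorm_def
    by (intro antisym rhoY_mono_AE) (use ae in \<open>auto elim!: eventually_mono\<close>)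
next
  fix f assume f: "f \<in> fspace rhoY"
  have fm: "f \<in> borel_measurable (lebesgue_on pos_half)" using f by (auto simp: fspace_def)
  show "fnorm rhoY f = 0 \<longleftrightarrow> (AE t in lebesgue_on pos_half. f t = 0)"
    unfolding fnorm_def rhoY_zero[OF e2_meas[OF fm]] e2_abs_zero ..
next
  fix u :: "nat \<Rightarrow> real \<Rightarrow> ereal"
  assume "\<forall>n. u n \<in> fspace rhoY"
    and "\<forall>e>0. \<exists>N. \<forall>m\<ge>N. \<forall>n\<ge>N. fnorm rhoY (\<lambda>t. u m t - u n t) < ennreal e"
  then show "\<exists>f\<in>fspace rhoY. (\<lambda>n. fnorm rhoY (\<lambda>t. u n t - f t)) \<longlonglongrightarrow> 0"
    by (intro complete_rhoY) auto
qed

lemma translate: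
  fixes b :: real
  assumes "B \<in> sets lebesgue"
  shows "(\<lambda>t. t + b) -` B \<in> sets lebesgue \<and> emeasure lebesgue ((\<lambda>t. t + b) -` B) = emeasure lebesgue B"
proof -
  have eq: "(\<lambda>t. t + b) -` B = (\<lambda>x. (-b) + x) ` B"
  proof (intro equalityI subsetI)
    fix t assume "t \<in> (\<lambda>t. t + b) -` B"
    then show "t \<in> (\<lambda>x. (-b) + x) ` B" by (intro image_eqI[of _ _ "t + b"]) auto
  qed auto
  have eq2: "(\<lambda>t. t + b) -` B = (\<lambda>x. 1 *\<^sub>R x + (-b)) ` B"
  proof (intro equalityI subsetI)
    fix t assume "t \<in> (\<lambda>t. t + b) -` B"
    then show "t \<in> (\<lambda>x. 1 *\<^sub>R x + (-b)) ` B" by (intro image_eqI[of _ _ "t + b"]) auto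
  qed auto
  show ?thesis
    using lebesgue_sets_translation[OF assms, of "-b"] emeasure_lebesgue_affine[of 1 "-b" B]
    unfolding eq[symmetric] eq2[symmetric] by simp
qed

lemma shift_MO:
  fixes b :: real
  assumes b: "b > 0"
  shows "(\<lambda>t. t + b) \<in> MO pos_half {b<..}"
proof -
  have bij: "bij_betw (\<lambda>t. t + b) pos_half {b<..}"
    unfolding bij_betw_def
  proof
    show "inj_on (\<lambda>t. t + b) pos_half" by (auto simp: inj_on_def)
    show "(\<lambda>t. t + b) ` pos_half = {b<..}"
    proof (intro equalityI subsetI)
      fix y assume "y \<in> {b<..}"
      then show "y \<in> (\<lambda>t. t + b) ` pos_half" by (intro image_eqI[of _ _ "y - b"]) auto
    qed auto
  qed
  have inv: "inv_into pos_half (\<lambda>t. t + b) y = y - b" if "y > b" for y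
    using that by (intro inv_into_f_eq) (auto simp: inj_on_def)
  have mp1: "measure_preserving_on pos_half {b<..} (\<lambda>t. t + b)"
    unfolding measure_preserving_on_def
  proof (intro allI impI)
    fix B :: "real set" assume B: "B \<in> sets lebesgue" "B \<subseteq> {b<..}"
    have "(\<lambda>t. t + b) -` B \<inter> pos_half = (\<lambda>t. t + b) -` B" using B(2) b by auto
    then show "(\<lambda>t. t + b) -` B \<inter> pos_half \<in> sets lebesgue \<and>
      emeasure lebesgue ((\<lambda>t. t + b) -` B \<inter> pos_half) = emeasure lebesgue B"
      using translate[OF B(1), of b] by simp
  qed
  have mp2: "measure_preserving_on {b<..} pos_half (inv_into pos_half (\<lambda>t. t + b))"
    unfolding measure_preserving_on_def
  proof (intro allI impI)
    fix B :: "real set" assume B: "B \<in> sets lebesgue" "B \<subseteq> pos_half"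
    have "inv_into pos_half (\<lambda>t. t + b) -` B \<inter> {b<..} = (\<lambda>t. t + (-b)) -` B"
    proof (intro equalityI subsetI)
      fix t assume "t \<in> inv_into pos_half (\<lambda>t. t + b) -` B \<inter> {b<..}"
      then show "t \<in> (\<lambda>t. t + (-b)) -` B" using inv[of t] by auto
    next
      fix t assume t: "t \<in> (\<lambda>t. t + (-b)) -` B"
      then have "t > b" using B(2) by auto
      then show "t \<in> inv_into pos_half (\<lambda>t. t + b) -` B \<inter> {b<..}" using inv[of t] t by auto
    qed
    then show "inv_into pos_half (\<lambda>t. t + b) -` B \<inter> {b<..} \<in> sets lebesgue \<and>
      emeasure lebesgue (inv_into pos_half (\<lambda>t. t + b) -` B \<inter> {b<..}) = emeasure lebesgue B"
      using translate[OF B(1), of "-b"] by simp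
  qed
  show ?thesis unfolding MO_def
    using bij mp1 mp2 by (auto simp: strict_mono_on_def)
qed

lemma rhoY_indicator_upper:
  assumes S: "S \<in> sets lebesgue" "S \<subseteq> {..s}" and s: "s \<ge> 0"
  shows "rhoY (indicator S) \<le> ennreal (sqrt s)"
  unfolding rhoY_def
proof (rule SUP_least)
  fix A assume A: "A \<in> calA"
  have As: "A \<in> sets lebesgue" "A \<subseteq> pos_half" using A by (auto simp: calA_def)
  have "set_nn_integral lebesgue A (indicator S) = (\<integral>\<^sup>+x. indicator (S \<inter> A) x \<partial>lebesgue)"
    by (intro nn_integral_cong) (auto simp: indicator_def)
  also have "\<dots> = emeasure lebesgue (S \<inter> A)" using S As by (intro nn_integral_indicator) auto
  also have "\<dots> \<le> ennreal (sqrt s)"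
  proof (cases "S \<inter> A = {}")
    case False
    then obtain y where y: "y \<in> S" "y \<in> A" by auto
    then have "A \<noteq> {}" by auto
    then have mA: "emeasure lebesgue A \<le> ennreal (sqrt (Inf A))" using A by (auto simp: calA_def)
    have "Inf A \<le> y" using y As by (intro cInf_lower) (auto intro!: bdd_belowI[of _ 0])
    also have "y \<le> s" using y S by auto
    finally have "ennreal (sqrt (Inf A)) \<le> ennreal (sqrt s)" by (intro ennreal_leI) auto
    moreover have "emeasure lebesgue (S \<inter> A) \<le> emeasure lebesgue A"
      using As by (intro emeasure_mono) auto
    ultimately show ?thesis using mA by (meson order.trans)
  qed simp
  finally show "set_nn_integral lebesgue A (indicator S) \<le> ennreal (sqrt s)" .
qed

lemma rhoY_indicator_lower:
  assumes b: "b > 0"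
  shows "ennreal (sqrt b) \<le> rhoY (indicator {b<..b + sqrt b})"
proof -
  let ?A = "{b<..b + sqrt b}"
  have sb: "sqrt b > 0" using b by auto
  have A: "?A \<in> calA" using b sb by (auto simp: calA_def)
  have "set_nn_integral lebesgue ?A (indicator ?A) = (\<integral>\<^sup>+x. indicator ?A x \<partial>lebesgue)"
    by (intro nn_integral_cong) (auto simp: indicator_def)
  also have "\<dots> = ennreal (sqrt b)" using sb by simp
  finally have eq: "set_nn_integral lebesgue ?A (indicator ?A) = ennreal (sqrt b)" .
  have "set_nn_integral lebesgue ?A (indicator ?A) \<le> rhoY (indicator ?A)"
    unfolding rhoY_def by (rule SUP_upper[OF A])
  then show ?thesis unfolding eq .
qed

lemma fnorm_ind: "fnorm rho (\<lambda>t. ereal (indicator S t)) = rho (indicator S)"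
  unfolding fnorm_def by (simp add: e2ennreal_ereal ennreal_indicator)

lemma ind_fspace:
  assumes S: "S \<in> sets lebesgue" "S \<subseteq> {..s}" "s \<ge> 0"
  shows "(\<lambda>t. ereal (indicator S t)) \<in> fspace rhoY"
proof -
  have "fnorm rhoY (\<lambda>t. ereal (indicator S t)) \<le> ennreal (sqrt s)"
    unfolding fnorm_ind using S by (intro rhoY_indicator_upper) auto
  then have "fnorm rhoY (\<lambda>t. ereal (indicator S t)) < \<infinity>" by (rule le_less_trans) simp
  moreover have "(\<lambda>t. ereal (indicator S t)) \<in> borel_measurable lebesgue"
    using S by measurable
  then have "(\<lambda>t. ereal (indicator S t)) \<in> borel_measurable (lebesgue_on pos_half)"
    by (rule measurable_restrict_space1)
  ultimately show ?thesis by (simp add: fspace_def)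
qed

lemma not_ess_rhoY: "\<not> ess_subrearrangement_invariant rhoY"
proof
  assume "ess_subrearrangement_invariant rhoY"
  then obtain \<sigma> c where sri: "subrearrangement_invariant \<sigma>" and sp: "fspace \<sigma> = fspace rhoY"
    and c: "c > 0" and eq: "\<And>f. f \<in> fspace rhoY \<Longrightarrow>
           fnorm rhoY f \<le> ennreal c * fnorm \<sigma> f \<and> fnorm \<sigma> f \<le> ennreal c * fnorm rhoY f"
    unfolding ess_subrearrangement_invariant_def by blast
  define s where "s = (c * c + 1)^2"
  define b where "b = s^2"
  have cc: "c * c + 1 > 0" using c by (metis add_pos_pos mult_pos_pos zero_less_one)
  have s0: "s > 0" unfolding s_def using cc by simp
  have b0: "b > 0" using s0 by (simp add: b_def)
  have sqb: "sqrt b = s" using s0 by (simp add: b_def)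
  have sqs: "sqrt s = c * c + 1" unfolding s_def real_sqrt_abs using cc by simp
  define f where "f t = ereal (indicator {b<..b + s} t)" for t
  define m where "m t = t + b" for t
  have fcomp: "f \<circ> m = (\<lambda>t. ereal (indicator {0<..s} t))"
    by (auto simp: f_def m_def indicator_def fun_eq_iff)
  have fF: "(\<lambda>t. if t \<in> {b<..} then f t else 0) = f"
    by (auto simp: f_def indicator_def fun_eq_iff)
  have fY: "f \<in> fspace rhoY" unfolding f_def
    by (rule ind_fspace[of _ "b + s"]) (use b0 s0 in auto)
  have gY: "f \<circ> m \<in> fspace rhoY" unfolding fcomp
    by (rule ind_fspace[of _ s]) (use s0 in auto)
  have "fnorm \<sigma> (f \<circ> m) = fnorm \<sigma> (\<lambda>t. if t \<in> {b<..} then f t else 0)"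
  proof (rule sri[unfolded subrearrangement_invariant_def, rule_format])
    show "{b<..} \<in> sets lebesgue" by simp
    show "{b<..} \<subseteq> pos_half" using b0 by auto
    show "m \<in> MO pos_half {b<..}" unfolding m_def[abs_def] by (rule shift_MO[OF b0])
    show "f \<in> fspace \<sigma>" using fY sp by simp
  qed
  then have same: "fnorm \<sigma> (f \<circ> m) = fnorm \<sigma> f" unfolding fF .
  have up: "fnorm rhoY (f \<circ> m) \<le> ennreal (sqrt s)"
    unfolding fcomp fnorm_ind using s0 by (intro rhoY_indicator_upper) auto
  have "ennreal s \<le> fnorm rhoY f"
    unfolding f_def fnorm_ind using rhoY_indicator_lower[OF b0] sqb by simp
  also have "\<dots> \<le> ennreal c * fnorm \<sigma> f" using eq[OF fY] by simp
  also have "\<dots> = ennreal c * fnorm \<sigma> (f \<circ> m)" using same by simp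
  also have "\<dots> \<le> ennreal c * (ennreal c * fnorm rhoY (f \<circ> m))"
    using eq[OF gY] by (intro mult_left_mono) auto
  also have "\<dots> \<le> ennreal c * (ennreal c * ennreal (sqrt s))"
    using up by (intro mult_left_mono) auto
  also have "\<dots> = ennreal c * ennreal (c * sqrt s)"
    using c s0 by (subst ennreal_mult[symmetric]) auto
  also have "\<dots> = ennreal (c * (c * sqrt s))"
    using c s0 by (subst ennreal_mult[symmetric]) auto
  finally have "ennreal s \<le> ennreal (c * (c * (c * c + 1)))" unfolding sqs .
  then have "s \<le> c * (c * (c * c + 1))"
    using c cc by (subst (asm) ennreal_le_iff) auto
  moreover have "c * (c * (c * c + 1)) < s"
    using cc unfolding s_def power2_eq_square by (simp add: algebra_simps)
  ultimately show False by simp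
qed


theorem mainTheorem4:
  shows "function_norm rhoY \<and> banach_fspace rhoY \<and> \<not> ess_subrearrangement_invariant rhoY"
  using function_norm_rhoY banach_rhoY not_ess_rhoY by blast

end
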